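(* Let $\mathcal{P}=\{P_1,\ldots,P_n\}$, let $\mathcal{Q}\subseteq 2^{\mathcal{P}}$ and let $\mathcal{F}\subseteq 2^{\mathcal{P}}$ be a fail-prone system. Consider the ideal $I=\langle \xi_{\mathcal{Q}_{\bar X}},\ \xi_{\mathcal{Q}_{\bar Y}},\ \sigma\rangle\subseteq \mathbb{B}(\bar X,\bar Y)$ and let $\mathcal{G}$ be a Gröbner basis for $I$. If $|SM(\mathcal{G})|=|\mathcal{Q}|^2$, then $\mathcal{Q}$ fulfills (classical) consistency, i.e. $Q_1\cap Q_2\neq\emptyset$ for all $Q_1,Q_2\in\mathcal{Q}$.
   Context: $\mathbb{B}=\mathbb{F}_2$ and $\mathbb{B}(X_1,\ldots,X_n,Y_1,\ldots,Y_n)=\mathbb{B}[\bar X,\bar Y]/\langle X_i^2-X_i, Y_i^2-Y_i\ (1\le i\le n)\rangle$ is the Boolean polynomial ring; $\bar X=\{X_1,\ldots,X_n\}$, $\bar Y=\{Y_1,\ldots,Y_n\}$. The map $\varphi:2^{\mathcal{P}}\to\mathbb{B}^n$ sends $S$ to its indicator vector ($\varphi(S)_i=1$ iff $P_i\in S$); $\varphi(\mathcal{A})=\{\varphi(A):A\in\mathcal{A}\}$. For $S\subseteq\mathcal{P}$ the characteristic polynomial is $\xi_S(Z_1,\ldots,Z_n)=\prod_{i=1}^n(1+Z_i+\varphi(S)_i)$, and for $\mathcal{A}\subseteq 2^{\mathcal{P}}$ and a block of variables $\bar Z$, $\xi_{\mathcal{A}_{\bar Z}}=\prod_{A\in\mathcal{A}}(\xi_A(\bar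 Z)+1)$. $\sigma(\bar X,\bar Y)=\prod_{i=1}^n(X_iY_i+1)$. A fail-prone system is a collection of subsets of $\mathcal{P}$ none of which is contained in another. Monomials are ordered by the lexicographic order with $\bar Y<\bar X$ as blocks and $X_n\prec\cdots\prec X_1$, $Y_n\prec\cdots\prec Y_1$ within blocks. $LM(f)$ is the largest monomial of $f$. A Gröbner basis of $I$ is a generating set $\mathcal{G}$ of $I$ such that for every nonzero $f\in I$ some $g\in\mathcal{G}$ has $LM(g)\mid LM(f)$. $SM(\mathcal{G})$, the set of standard monomials, is the set of multilinear monomials (each variable with exponent $0$ or $1$) not lying in the ideal generated by $\{LM(f):f\in I\}$. *)

theory Defs
  imports Main
begin

text \<open>Boolean polynomial ring B(X_1..X_n,Y_1..Y_n) = F_2[X,Y]/<X_i^2-X_i, Y_i^2-Y_i>.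
  Every element has a unique multilinear representative, which we represent as the
  (finite) set of its monomials; a multilinear monomial is the set of variables
  occurring in it. Participants are P_1..P_n, identified with the indices 1..n.\<close>

datatype var = X nat | Y nat

type_synonym monom = "var set"
type_synonym bpoly = "var set set"

definition Vars :: "nat \<Rightarrow> var set" where
  "Vars n = X ` {1..n} \<union> Y ` {1..n}"

definition BPolys :: "nat \<Rightarrow> bpoly set" where
  "BPolys n = Pow (Pow (Vars n))"

definition pzero :: bpoly where "pzero = {}"
definition pone :: bpoly where "pone = {{}}"
definition pvar :: "var \<Rightarrow> bpoly" where "pvar v = {{v}}"

text \<open>Addition in characteristic 2: symmetric difference of monomial sets.\<close>
definition padd :: "bpoly \<Rightarrow> bpoly \<Rightarrow> bpoly" where
  "padd p q = (p - q) \<union> (q - p)"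

text \<open>Multiplication: monomials multiply by union (since Z^2 = Z), coefficients mod 2.\<close>
definition pmul :: "bpoly \<Rightarrow> bpoly \<Rightarrow> bpoly" where
  "pmul p q = (if finite p \<and> finite q
     then {m. odd (card {(a, b). a \<in> p \<and> b \<in> q \<and> a \<union> b = m})} else {})"

text \<open>Finite product of Boolean polynomials (pmul is commutative and associative).\<close>
definition bprod :: "('i \<Rightarrow> bpoly) \<Rightarrow> 'i set \<Rightarrow> bpoly" where
  "bprod f A = Finite_Set.fold (\<lambda>i acc. pmul (f i) acc) pone A"

definition phi :: "nat set \<Rightarrow> nat \<Rightarrow> bpoly" where
  "phi S i = (if i \<in> S then pone else pzero)"

definition xi :: "nat \<Rightarrow> nat set \<Rightarrow> (nat \<Rightarrow> var) \<Rightarrow> bpoly" where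
  "xi n S Z = bprod (\<lambda>i. padd (padd pone (pvar (Z i))) (phi S i)) {1..n}"

definition xi_sys :: "nat \<Rightarrow> nat set set \<Rightarrow> (nat \<Rightarrow> var) \<Rightarrow> bpoly" where
  "xi_sys n \<A> Z = bprod (\<lambda>A. padd (xi n A Z) pone) \<A>"

definition sigma :: "nat \<Rightarrow> bpoly" where
  "sigma n = bprod (\<lambda>i. padd (pmul (pvar (X i)) (pvar (Y i))) pone) {1..n}"

inductive_set bideal :: "nat \<Rightarrow> bpoly set \<Rightarrow> bpoly set" for n G where
  gen: "g \<in> G \<Longrightarrow> g \<in> bideal n G"
| zero: "pzero \<in> bideal n G"
| add: "p \<in> bideal n G \<Longrightarrow> q \<in> bideal n G \<Longrightarrow> padd p q \<in> bideal n G"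
| mul: "r \<in> BPolys n \<Longrightarrow> p \<in> bideal n G \<Longrightarrow> pmul r p \<in> bideal n G"

text \<open>Lexicographic monomial order: variables ranked X_1 > ... > X_n > Y_1 > ... > Y_n
  (smaller rank = larger variable).\<close>
fun rank :: "nat \<Rightarrow> var \<Rightarrow> nat" where
  "rank n (X i) = i"
| "rank n (Y i) = n + i"

definition mono_less :: "nat \<Rightarrow> monom \<Rightarrow> monom \<Rightarrow> bool" where
  "mono_less n a b \<longleftrightarrow> (\<exists>v \<in> b - a. \<forall>w \<in> (a - b) \<union> (b - a). rank n v \<le> rank n w)"

text \<open>Leading monomial (for nonzero f).\<close>
definition LM :: "nat \<Rightarrow> bpoly \<Rightarrow> monom" where
  "LM n f = (THE m. m \<in> f \<and> (\<forall>m' \<in> f. m' \<noteq> m \<longrightarrow> mono_less n m' m))"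

definition is_groebner_basis :: "nat \<Rightarrow> bpoly set \<Rightarrow> bpoly set \<Rightarrow> bool" where
  "is_groebner_basis n G I \<longleftrightarrow> G \<subseteq> I \<and> bideal n G = I \<and>
     (\<forall>f \<in> I. f \<noteq> pzero \<longrightarrow> (\<exists>g \<in> G. g \<noteq> pzero \<and> LM n g \<subseteq> LM n f))"

definition SM :: "nat \<Rightarrow> bpoly set \<Rightarrow> monom set" where
  "SM n I = {m. m \<subseteq> Vars n \<and> {m} \<notin> bideal n {{LM n f} | f. f \<in> I \<and> f \<noteq> pzero}}"

definition fail_prone :: "nat \<Rightarrow> nat set set \<Rightarrow> bool" where
  "fail_prone n F \<longleftrightarrow> F \<subseteq> Pow {1..n} \<and> (\<forall>A \<in> F. \<forall>B \<in> F. A \<subseteq> B \<longrightarrow> A = B)"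

end

theory Submission
  imports Defs
begin


definition ev :: "bpoly \<Rightarrow> var set \<Rightarrow> bool" where
  "ev p a = odd (card {m\<in>p. m \<subseteq> a})"

lemma padd_finite: "finite p \<Longrightarrow> finite q \<Longrightarrow> finite (padd p q)"
  by (simp add: padd_def)

lemma ev_padd: assumes "finite p" "finite q"
  shows "ev (padd p q) a = (ev p a \<noteq> ev q a)"
proof -
  let ?P = "{m\<in>p. m \<subseteq> a}" and ?Q = "{m\<in>q. m \<subseteq> a}"
  have e: "{m\<in>padd p q. m \<subseteq> a} = (?P - ?Q) \<union> (?Q - ?P)" by (auto simp: padd_def)
  have f: "finite ?P" "finite ?Q" using assms by auto
  have c: "card ((?P - ?Q) \<union> (?Q - ?P)) + 2 * card (?P \<inter> ?Q) = card ?P + card ?Q"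
  proof -
    have "card ((?P - ?Q) \<union> (?Q - ?P)) = card (?P - ?Q) + card (?Q - ?P)"
      by (rule card_Un_disjoint) (use f in auto)
    moreover have "card ?P = card (?P - ?Q) + card (?P \<inter> ?Q)"
    proof -
      have "card ?P = card ((?P - ?Q) \<union> (?P \<inter> ?Q))" by (rule arg_cong[where f=card]) blast
      also have "\<dots> = card (?P - ?Q) + card (?P \<inter> ?Q)" by (rule card_Un_disjoint) (use f in auto)
      finally show ?thesis .
    qed
    moreover have "card ?Q = card (?Q - ?P) + card (?P \<inter> ?Q)"
    proof -
      have "card ?Q = card ((?Q - ?P) \<union> (?P \<inter> ?Q))" by (rule arg_cong[where f=card]) blast
      also have "\<dots> = card (?Q - ?P) + card (?P \<inter> ?Q)" by (rule card_Un_disjoint) (use f in auto)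
      finally show ?thesis .
    qed
    ultimately show ?thesis by simp
  qed
  have "odd (card ((?P - ?Q) \<union> (?Q - ?P))) = (odd (card ?P) \<noteq> odd (card ?Q))"
    using c by presburger
  then show ?thesis unfolding ev_def e by simp
qed

lemma pmul_sub: "pmul p q \<subseteq> (\<lambda>(x,y). x \<union> y) ` (p \<times> q)"
proof
  fix m assume "m \<in> pmul p q"
  then have "finite p" "finite q" and o: "odd (card {(a, b). a \<in> p \<and> b \<in> q \<and> a \<union> b = m})"
    by (auto simp: pmul_def split: if_splits)
  then have "{(a, b). a \<in> p \<and> b \<in> q \<and> a \<union> b = m} \<noteq> {}" by (intro notI) simp
  then show "m \<in> (\<lambda>(x,y). x \<union> y) ` (p \<times> q)" by auto
qed

lemma pmul_finite: "finite p \<Longrightarrow> finite q \<Longrightarrow> finite (pmul p q)"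
  by (rule finite_subset[OF pmul_sub]) auto

lemma pmul_Pow: assumes "p \<subseteq> Pow W" "q \<subseteq> Pow W" shows "pmul p q \<subseteq> Pow W"
proof
  fix m assume "m \<in> pmul p q"
  then have "m \<in> (\<lambda>(x,y). x \<union> y) ` (p \<times> q)" using pmul_sub by blast
  then show "m \<in> Pow W" using assms by auto
qed

lemma ev_pone: "ev pone a"
proof -
  have "{m\<in>pone. m \<subseteq> a} = {{}}" by (auto simp: pone_def)
  then show ?thesis by (simp add: ev_def)
qed

lemma ev_pzero: "\<not> ev pzero a"
  by (simp add: ev_def pzero_def)

lemma ev_pvar: "ev (pvar v) a = (v \<in> a)"
proof -
  have "{m\<in>pvar v. m \<subseteq> a} = (if v \<in> a then {{v}} else {})" by (auto simp: pvar_def)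
  then show ?thesis by (simp add: ev_def)
qed

lemma padd_Pow: "p \<subseteq> Pow W \<Longrightarrow> q \<subseteq> Pow W \<Longrightarrow> padd p q \<subseteq> Pow W"
  by (auto simp: padd_def)

lemma ev_pmul: assumes "finite p" "finite q"
  shows "ev (pmul p q) a = (ev p a \<and> ev q a)"
proof -
  let ?pa = "{x\<in>p. x \<subseteq> a}" and ?qa = "{y\<in>q. y \<subseteq> a}"
  define c where "c m = card {(x, y). x \<in> p \<and> y \<in> q \<and> x \<union> y = m}" for m
  define U where "U = (\<lambda>(x,y). x \<union> y) ` (?pa \<times> ?qa)"
  have fU: "finite U" unfolding U_def using assms by auto
  have "card (?pa \<times> ?qa) = (\<Sum>m\<in>U. card {z \<in> ?pa \<times> ?qa. (\<lambda>(x,y). x \<union> y) z = m})"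
    unfolding U_def using sum.image_gen[of "?pa \<times> ?qa" "\<lambda>_. 1::nat" "\<lambda>(x,y). x \<union> y"] assms by simp
  also have "\<dots> = (\<Sum>m\<in>U. c m)"
  proof (rule sum.cong[OF refl])
    fix m assume "m \<in> U"
    then have "m \<subseteq> a" unfolding U_def by auto
    then have "{z \<in> ?pa \<times> ?qa. (\<lambda>(x,y). x \<union> y) z = m} = {(x, y). x \<in> p \<and> y \<in> q \<and> x \<union> y = m}"
      by auto
    then show "card {z \<in> ?pa \<times> ?qa. (\<lambda>(x,y). x \<union> y) z = m} = c m" unfolding c_def by simp
  qed
  finally have s: "card ?pa * card ?qa = (\<Sum>m\<in>U. c m)" by (simp add: card_cartesian_product)
  have e: "{m\<in>pmul p q. m \<subseteq> a} = {m\<in>U. odd (c m)}"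
  proof (intro set_eqI iffI)
    fix m assume m: "m \<in> {m\<in>pmul p q. m \<subseteq> a}"
    then have o: "odd (c m)" using assms by (auto simp: pmul_def c_def)
    then have "{(x, y). x \<in> p \<and> y \<in> q \<and> x \<union> y = m} \<noteq> {}" unfolding c_def by (intro notI) simp
    then obtain x y where "x \<in> p" "y \<in> q" "x \<union> y = m" by auto
    with m have "m \<in> U" unfolding U_def by auto
    with o show "m \<in> {m\<in>U. odd (c m)}" by auto
  next
    fix m assume "m \<in> {m\<in>U. odd (c m)}"
    then show "m \<in> {m\<in>pmul p q. m \<subseteq> a}" using assms unfolding U_def by (auto simp: pmul_def c_def)
  qed
  have "ev (pmul p q) a = odd (card {m\<in>U. odd (c m)})" unfolding ev_def e ..
  also have "\<dots> = odd (\<Sum>m\<in>U. c m)" using even_sum_iff[OF fU, of c] by simp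
  also have "\<dots> = (ev p a \<and> ev q a)" unfolding s[symmetric] ev_def by simp
  finally show ?thesis .
qed

lemma ev_inj: assumes "p \<subseteq> Pow W" "q \<subseteq> Pow W" "finite p" "finite q"
  and "\<And>b. b \<subseteq> W \<Longrightarrow> ev p b = ev q b"
  shows "p = q"
proof (rule ccontr)
  assume "p \<noteq> q"
  let ?r = "padd p q"
  have "?r \<noteq> {}" using \<open>p \<noteq> q\<close> by (auto simp: padd_def)
  moreover have "finite ?r" using assms by (simp add: padd_finite)
  ultimately obtain m where m: "m \<in> ?r" "\<forall>b\<in>?r. b \<le> m \<longrightarrow> m = b"
    using finite_has_minimal by blast
  have "m \<subseteq> W" using m(1) assms(1,2) by (auto simp: padd_def)
  have "{m'\<in>?r. m' \<subseteq> m} = {m}" using m by auto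
  then have "ev ?r m" by (simp add: ev_def)
  moreover have "\<not> ev ?r m" using ev_padd[OF assms(3,4)] assms(5)[OF \<open>m \<subseteq> W\<close>] by simp
  ultimately show False by simp
qed

lemma pmul_comm_left: assumes "finite p" "finite q"
  shows "pmul p (pmul q r) = pmul q (pmul p r)"
proof (cases "finite r")
  case True
  let ?W = "\<Union>p \<union> \<Union>q \<union> \<Union>r"
  have P: "p \<subseteq> Pow ?W" "q \<subseteq> Pow ?W" "r \<subseteq> Pow ?W" by auto
  have P2: "pmul p (pmul q r) \<subseteq> Pow ?W" "pmul q (pmul p r) \<subseteq> Pow ?W"
    using P by (simp_all add: pmul_Pow)
  show ?thesis
    by (rule ev_inj[OF P2]) (use assms True in \<open>simp_all add: pmul_finite ev_pmul, blast\<close>)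
next
  case False
  then show ?thesis by (simp add: pmul_def)
qed

lemma bprod_props:
  assumes "finite A" "\<And>i. i \<in> A \<Longrightarrow> finite (f i) \<and> f i \<subseteq> Pow W"
  shows "finite (bprod f A) \<and> bprod f A \<subseteq> Pow W \<and> (\<forall>a. ev (bprod f A) a = (\<forall>i\<in>A. ev (f i) a))"
proof -
  interpret comp_fun_commute_on A "\<lambda>i acc. pmul (f i) acc"
    by unfold_locales (auto simp: assms pmul_comm_left)
  have "\<And>B. B \<subseteq> A \<Longrightarrow> finite (bprod f B) \<and> bprod f B \<subseteq> Pow W \<and> (\<forall>a. ev (bprod f B) a = (\<forall>i\<in>B. ev (f i) a))"
  proof -
    fix B assume "B \<subseteq> A"
    then have "finite B" using assms(1) finite_subset by blast
    then show "?thesis B" using \<open>B \<subseteq> A\<close>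
    proof (induction B)
      case empty
      show ?case by (simp add: bprod_def ev_pone) (simp add: pone_def)
    next
      case (insert x F)
      have eq: "bprod f (insert x F) = pmul (f x) (bprod f F)"
        unfolding bprod_def by (rule fold_insert) (use insert in auto)
      have h: "finite (f x)" "f x \<subseteq> Pow W" "finite (bprod f F)" "bprod f F \<subseteq> Pow W"
        "\<forall>a. ev (bprod f F) a = (\<forall>i\<in>F. ev (f i) a)"
        using insert assms(2)[of x] by auto
      show ?case unfolding eq using h
        by (simp add: pmul_finite ev_pmul pmul_Pow)
    qed
  qed
  then show ?thesis by blast
qed



lemma finite_Vars: "finite (Vars n)" by (simp add: Vars_def)

lemma rank_inj: "inj_on (rank n) (Vars n)"
  by (auto simp: Vars_def inj_on_def)

lemma ml_asym: assumes "a \<subseteq> Vars n" "b \<subseteq> Vars n" "mono_less n a b" "mono_less n b a" shows False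
proof -
  obtain v where v: "v \<in> b - a" "\<forall>w \<in> (a - b) \<union> (b - a). rank n v \<le> rank n w" using assms(3) mono_less_def by blast
  obtain u where u: "u \<in> a - b" "\<forall>w \<in> (b - a) \<union> (a - b). rank n u \<le> rank n w" using assms(4) mono_less_def by blast
  have "rank n u = rank n v" using u v by force
  moreover have "u \<in> Vars n" "v \<in> Vars n" using u v assms by auto
  ultimately have "u = v" using rank_inj[of n] by (auto simp: inj_on_def)
  then show False using u v by auto
qed

lemma ml_total: assumes "a \<subseteq> Vars n" "b \<subseteq> Vars n" "a \<noteq> b" shows "mono_less n a b \<or> mono_less n b a"
proof -
  let ?D = "(a - b) \<union> (b - a)"
  have "finite ?D" using assms finite_Vars finite_subset by blast
  moreover have "?D \<noteq> {}" using assms(3) by auto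
  ultimately obtain k where k: "k \<in> rank n ` ?D" "\<not> (\<exists>x\<in>rank n ` ?D. x < k)"
    using ex_min_if_finite[of "rank n ` ?D"] by blast
  then obtain v where v1: "v \<in> ?D" "k = rank n v" by blast
  have v2: "\<forall>w\<in>?D. rank n v \<le> rank n w"
  proof
    fix w assume "w \<in> ?D"
    then have "\<not> rank n w < k" using k(2) by blast
    then show "rank n v \<le> rank n w" using v1(2) by simp
  qed
  show ?thesis
  proof (cases "v \<in> b - a")
    case True
    then have "mono_less n a b" unfolding mono_less_def using v2 by (intro bexI[of _ v])
    then show ?thesis ..
  next
    case False
    then have "v \<in> a - b" using v1(1) by blast
    moreover have "\<forall>w\<in>(b - a) \<union> (a - b). rank n v \<le> rank n w" using v2 by (simp add: Un_commute)
    ultimately have "mono_less n b a" unfolding mono_less_def by (intro bexI[of _ v])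
    then show ?thesis ..
  qed
qed

lemma ml_trans: assumes "a \<subseteq> Vars n" "b \<subseteq> Vars n" "c \<subseteq> Vars n" "mono_less n a b" "mono_less n b c"
  shows "mono_less n a c"
proof -
  obtain v where v: "v \<in> b - a" "\<forall>w \<in> (a - b) \<union> (b - a). rank n v \<le> rank n w" using assms(4) mono_less_def by blast
  obtain u where u: "u \<in> c - b" "\<forall>w \<in> (b - c) \<union> (c - b). rank n u \<le> rank n w" using assms(5) mono_less_def by blast
  have uv: "u \<in> Vars n" "v \<in> Vars n" using u v assms by auto
  have "u \<noteq> v" using u v by auto
  then have "rank n u \<noteq> rank n v" using uv rank_inj[of n] by (auto simp: inj_on_def)
  then show ?thesis
  proof (cases "rank n v < rank n u")
    case True
    then have "v \<in> c" using u v by force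
    moreover have r: "\<forall>w \<in> (a - c) \<union> (c - a). rank n v \<le> rank n w"
    proof
      fix w assume "w \<in> (a - c) \<union> (c - a)"
      then have "w \<in> (a - b) \<union> (b - a) \<or> w \<in> (b - c) \<union> (c - b)" by auto
      then show "rank n v \<le> rank n w" using u v True by force
    qed
    ultimately have "v \<in> c - a" using v by simp
    then show ?thesis unfolding mono_less_def using r by (intro bexI[of _ v])
  next
    case False
    with \<open>rank n u \<noteq> rank n v\<close> have lt: "rank n u < rank n v" by simp
    then have "u \<notin> a" using u v by force
    moreover have r: "\<forall>w \<in> (a - c) \<union> (c - a). rank n u \<le> rank n w"
    proof
      fix w assume "w \<in> (a - c) \<union> (c - a)"
      then have "w \<in> (a - b) \<union> (b - a) \<or> w \<in> (b - c) \<union> (c - b)" by auto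
      then show "rank n u \<le> rank n w" using u v lt by force
    qed
    ultimately have "u \<in> c - a" using u by simp
    then show ?thesis unfolding mono_less_def using r by (intro bexI[of _ u])
  qed
qed

lemma ex_max: assumes "finite p" "p \<noteq> {}" "p \<subseteq> Pow (Vars n)"
  shows "\<exists>m\<in>p. \<forall>m'\<in>p. m' \<noteq> m \<longrightarrow> mono_less n m' m"
  using assms
proof (induction p rule: finite_ne_induct)
  case (singleton x)
  then show ?case by simp
next
  case (insert x F)
  then obtain m where m: "m \<in> F" "\<forall>m'\<in>F. m' \<noteq> m \<longrightarrow> mono_less n m' m" by auto
  have xm: "x \<noteq> m" using m insert by auto
  have sub: "x \<subseteq> Vars n" "m \<subseteq> Vars n" "F \<subseteq> Pow (Vars n)" using insert m by auto
  show ?case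
  proof (cases "mono_less n x m")
    case True
    then show ?thesis using m by auto
  next
    case False
    then have "mono_less n m x" using ml_total[OF sub(1,2) xm] by simp
    then have "\<forall>m'\<in>F. mono_less n m' x"
    proof (intro ballI)
      fix m' assume "m' \<in> F"
      show "mono_less n m' x"
      proof (cases "m' = m")
        case True then show ?thesis using \<open>mono_less n m x\<close> by simp
      next
        case False
        then have "mono_less n m' m" using m \<open>m' \<in> F\<close> by blast
        moreover have "m' \<subseteq> Vars n" using sub \<open>m' \<in> F\<close> by blast
        ultimately show ?thesis using ml_trans[of m' n m x] sub \<open>mono_less n m x\<close> by blast
      qed
    qed
    then show ?thesis using insert.hyps by auto
  qed
qed

lemma LM_in: assumes "finite p" "p \<noteq> {}" "p \<subseteq> Pow (Vars n)"
  shows "LM n p \<in> p"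
proof -
  obtain m where m: "m\<in>p" "\<forall>m'\<in>p. m' \<noteq> m \<longrightarrow> mono_less n m' m" using ex_max[OF assms] by blast
  have "\<exists>!m. m \<in> p \<and> (\<forall>m' \<in> p. m' \<noteq> m \<longrightarrow> mono_less n m' m)"
  proof (rule ex1I[of _ m])
    show "m \<in> p \<and> (\<forall>m' \<in> p. m' \<noteq> m \<longrightarrow> mono_less n m' m)" using m by blast
  next
    fix k assume k: "k \<in> p \<and> (\<forall>m' \<in> p. m' \<noteq> k \<longrightarrow> mono_less n m' k)"
    show "k = m"
    proof (rule ccontr)
      assume "k \<noteq> m"
      then show False using k m ml_asym[of m n k] assms(3) by blast
    qed
  qed
  then show ?thesis unfolding LM_def by (rule theI'[THEN conjunct1])
qed



lemma fin_basic[simp]: "finite pone" "finite pzero" "finite (pvar v)" "finite (phi S i)"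
  by (auto simp: pone_def pzero_def pvar_def phi_def)

lemma BPolys_finite: "p \<in> BPolys n \<Longrightarrow> finite p"
  unfolding BPolys_def using finite_Vars by (meson PowD finite_Pow_iff finite_subset)

lemma xi_props: assumes "\<And>i. i \<in> {1..n} \<Longrightarrow> Z i \<in> Vars n"
  shows "xi n S Z \<in> BPolys n \<and> (\<forall>a. ev (xi n S Z) a = (\<forall>i\<in>{1..n}. (Z i \<in> a) = (i \<in> S)))"
proof -
  let ?f = "\<lambda>i. padd (padd pone (pvar (Z i))) (phi S i)"
  have h: "finite (?f i) \<and> ?f i \<subseteq> Pow (Vars n)" if "i \<in> {1..n}" for i
    using assms[OF that] by (auto simp: padd_def pone_def pvar_def phi_def pzero_def)
  have ev: "ev (?f i) a = ((Z i \<in> a) = (i \<in> S))" for i a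
  proof -
    show ?thesis
      by (simp add: ev_padd padd_finite ev_pone ev_pvar)
         (simp add: phi_def ev_pone ev_pzero)
  qed
  show ?thesis using bprod_props[of "{1..n}" ?f "Vars n", OF _ h] ev
    unfolding xi_def BPolys_def by auto
qed

lemma xi_sys_props: assumes "\<And>i. i \<in> {1..n} \<Longrightarrow> Z i \<in> Vars n" "finite Q"
  shows "xi_sys n Q Z \<in> BPolys n \<and>
    (\<forall>a. ev (xi_sys n Q Z) a = (\<forall>A\<in>Q. \<not> (\<forall>i\<in>{1..n}. (Z i \<in> a) = (i \<in> A))))"
proof -
  let ?f = "\<lambda>A. padd (xi n A Z) pone"
  have xA: "xi n A Z \<in> BPolys n \<and> (\<forall>a. ev (xi n A Z) a = (\<forall>i\<in>{1..n}. (Z i \<in> a) = (i \<in> A)))" for A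
    by (rule xi_props) (rule assms(1))
  have h: "finite (?f A) \<and> ?f A \<subseteq> Pow (Vars n)" for A
    using xA[of A] BPolys_finite[of "xi n A Z" n]
    by (auto simp: padd_def pone_def BPolys_def)
  have ev: "ev (?f A) a = (\<not> (\<forall>i\<in>{1..n}. (Z i \<in> a) = (i \<in> A)))" for A a
    using xA[of A] BPolys_finite[of "xi n A Z" n]
    by (simp add: ev_padd ev_pone)
  show ?thesis using bprod_props[of Q ?f "Vars n", OF assms(2) h] ev
    unfolding xi_sys_def BPolys_def by auto
qed

lemma sigma_props:
  shows "sigma n \<in> BPolys n \<and> (\<forall>a. ev (sigma n) a = (\<forall>i\<in>{1..n}. \<not> (X i \<in> a \<and> Y i \<in> a)))"
proof -
  let ?f = "\<lambda>i. padd (pmul (pvar (X i)) (pvar (Y i))) pone"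
  have fin: "finite (pvar v)" for v by (simp add: pvar_def)
  have h: "finite (?f i) \<and> ?f i \<subseteq> Pow (Vars n)" if "i \<in> {1..n}" for i
  proof -
    have "pvar (X i) \<subseteq> Pow (Vars n)" "pvar (Y i) \<subseteq> Pow (Vars n)"
      using that by (auto simp: pvar_def Vars_def)
    then have "pmul (pvar (X i)) (pvar (Y i)) \<subseteq> Pow (Vars n)" by (rule pmul_Pow)
    then show ?thesis using fin
      by (auto simp: padd_def pone_def pmul_finite intro: pmul_finite)
  qed
  have ev: "ev (?f i) a = (\<not> (X i \<in> a \<and> Y i \<in> a))" for i a
    by (simp add: ev_padd ev_pmul pmul_finite ev_pone ev_pvar)
  show ?thesis using bprod_props[of "{1..n}" ?f "Vars n", OF _ h] ev
    unfolding sigma_def BPolys_def by auto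
qed

lemma bideal_sub: assumes "G \<subseteq> BPolys n" shows "bideal n G \<subseteq> BPolys n"
proof
  fix p assume "p \<in> bideal n G"
  then show "p \<in> BPolys n"
  proof (induction rule: bideal.induct)
    case (gen g) then show ?case using assms by auto
  next
    case zero then show ?case by (simp add: pzero_def BPolys_def)
  next
    case (add p q) then show ?case unfolding BPolys_def by (simp add: padd_Pow)
  next
    case (mul r p) then show ?case unfolding BPolys_def by (simp add: pmul_Pow)
  qed
qed

definition delta :: "nat \<Rightarrow> var set \<Rightarrow> bpoly" where
  "delta n a = {m. a \<subseteq> m \<and> m \<subseteq> Vars n}"

lemma delta_BPolys: "delta n a \<in> BPolys n"
  by (auto simp: delta_def BPolys_def)

lemma ev_delta: assumes "b \<subseteq> Vars n" shows "ev (delta n a) b = (a = b)"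
proof (cases "a \<subseteq> b")
  case True
  have e: "{m\<in>delta n a. m \<subseteq> b} = (\<lambda>s. a \<union> s) ` Pow (b - a)"
  proof (intro set_eqI iffI)
    fix m assume "m \<in> {m\<in>delta n a. m \<subseteq> b}"
    then have m: "a \<subseteq> m" "m \<subseteq> b" by (auto simp: delta_def)
    then have "m = a \<union> (m - a)" "m - a \<in> Pow (b - a)" by blast+
    then show "m \<in> (\<lambda>s. a \<union> s) ` Pow (b - a)" by (rule image_eqI)
  next
    fix m assume "m \<in> (\<lambda>s. a \<union> s) ` Pow (b - a)"
    then obtain s where "s \<subseteq> b - a" "m = a \<union> s" by blast
    then show "m \<in> {m\<in>delta n a. m \<subseteq> b}" using assms True by (auto simp: delta_def)
  qed
  have inj: "inj_on (\<lambda>s. a \<union> s) (Pow (b - a))"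
    by (auto simp: inj_on_def)
  have fb: "finite (b - a)" using assms finite_Vars finite_subset by blast
  have "card {m\<in>delta n a. m \<subseteq> b} = 2 ^ card (b - a)"
    unfolding e card_image[OF inj] using fb by (simp add: card_Pow)
  moreover have "(card (b - a) = 0) = (a = b)" using fb True by auto
  ultimately show ?thesis unfolding ev_def by auto
next
  case False
  then have "{m\<in>delta n a. m \<subseteq> b} = {}" by (auto simp: delta_def)
  then have c0: "card {m\<in>delta n a. m \<subseteq> b} = 0" by (metis card.empty)
  have "a \<noteq> b" using False by auto
  then show ?thesis unfolding ev_def c0 by simp
qed



definition Vz :: "nat \<Rightarrow> bpoly set \<Rightarrow> var set set" where
  "Vz n G = {a. a \<subseteq> Vars n \<and> (\<forall>g\<in>G. \<not> ev g a)}"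

lemma null_aux: assumes G: "G \<subseteq> BPolys n" and "finite P" "P \<subseteq> Pow (Vars n) - Vz n G"
  shows "\<exists>h\<in>bideal n G. \<forall>b. b \<subseteq> Vars n \<longrightarrow> ev h b = (b \<in> P)"
  using assms(2,3)
proof (induction P)
  case empty
  show ?case using ev_pzero bideal.zero by blast
next
  case (insert a P)
  then obtain h where h: "h \<in> bideal n G" "\<forall>b. b \<subseteq> Vars n \<longrightarrow> ev h b = (b \<in> P)" by auto
  have a: "a \<subseteq> Vars n" "a \<notin> Vz n G" using insert by auto
  then obtain g where g: "g \<in> G" "ev g a" unfolding Vz_def by auto
  let ?k = "pmul (delta n a) g"
  have k: "?k \<in> bideal n G" using g(1) by (intro bideal.mul delta_BPolys bideal.gen)
  have fg: "finite g" using g(1) G BPolys_finite by blast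
  have fd: "finite (delta n a)" using delta_BPolys BPolys_finite by blast
  have fh: "finite h" using h(1) bideal_sub[OF G] BPolys_finite by blast
  have fk: "finite ?k" using fd fg by (rule pmul_finite)
  have evk: "ev ?k b = (b = a)" if "b \<subseteq> Vars n" for b
    using ev_pmul[OF fd fg] ev_delta[OF that] g(2) by auto
  have "padd h ?k \<in> bideal n G" using h(1) k by (rule bideal.add)
  moreover have "\<forall>b. b \<subseteq> Vars n \<longrightarrow> ev (padd h ?k) b = (b \<in> insert a P)"
    using ev_padd[OF fh fk] evk h(2) insert.hyps(2) by auto
  ultimately show ?case by blast
qed

lemma null: assumes G: "G \<subseteq> BPolys n" and p: "p \<in> BPolys n" and z: "\<forall>a\<in>Vz n G. \<not> ev p a"
  shows "p \<in> bideal n G"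
proof -
  let ?P = "{a. a \<subseteq> Vars n \<and> ev p a}"
  have fP: "finite ?P" using finite_Vars by (simp add: finite_subset[of _ "Pow (Vars n)"] subset_eq)
  have sP: "?P \<subseteq> Pow (Vars n) - Vz n G" using z by (auto simp: Vz_def)
  obtain h where h: "h \<in> bideal n G" "\<forall>b. b \<subseteq> Vars n \<longrightarrow> ev h b = (b \<in> ?P)"
    using null_aux[OF G fP sP] by (elim bexE)
  have hB: "h \<in> BPolys n" using h(1) bideal_sub[OF G] by blast
  have "h = p"
  proof (rule ev_inj[of h "Vars n" p])
    show "h \<subseteq> Pow (Vars n)" using hB by (simp add: BPolys_def)
    show "p \<subseteq> Pow (Vars n)" using p by (simp add: BPolys_def)
    show "finite h" using hB by (rule BPolys_finite)
    show "finite p" using p by (rule BPolys_finite)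
    fix b assume "b \<subseteq> Vars n"
    then show "ev h b = ev p b" using h(2) by simp
  qed
  then show ?thesis using h(1) by simp
qed

lemma indep: assumes "p \<subseteq> SM n I" "p \<in> I" shows "p = {}"
proof (rule ccontr)
  assume ne: "p \<noteq> {}"
  have sub: "p \<subseteq> Pow (Vars n)" using assms(1) by (auto simp: SM_def)
  then have fin: "finite p" using finite_Vars by (meson finite_Pow_iff finite_subset)
  have "LM n p \<in> p" by (rule LM_in[OF fin ne sub])
  then have "LM n p \<in> SM n I" using assms(1) by blast
  then have "{LM n p} \<notin> bideal n {{LM n f} | f. f \<in> I \<and> f \<noteq> pzero}" by (simp add: SM_def)
  moreover have "{LM n p} \<in> bideal n {{LM n f} | f. f \<in> I \<and> f \<noteq> pzero}"
    using assms(2) ne by (intro bideal.gen) (auto simp: pzero_def)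
  ultimately show False by blast
qed

lemma SM_le_V: assumes G: "G \<subseteq> BPolys n"
  shows "card (SM n (bideal n G)) \<le> card (Vz n G)"
proof -
  let ?S = "SM n (bideal n G)" and ?V = "Vz n G"
  have Ssub: "?S \<subseteq> Pow (Vars n)" by (auto simp: SM_def)
  have fS: "finite ?S" using Ssub finite_Vars by (meson finite_Pow_iff finite_subset)
  have fV: "finite ?V" unfolding Vz_def using finite_Vars
    by (simp add: finite_subset[of _ "Pow (Vars n)"] subset_eq)
  let ?phi = "\<lambda>p. {a\<in>?V. ev p a}"
  have inj: "inj_on ?phi (Pow ?S)"
  proof (rule inj_onI)
    fix p q assume pq: "p \<in> Pow ?S" "q \<in> Pow ?S" "?phi p = ?phi q"
    have fp: "finite p" "finite q" using pq fS finite_subset by auto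
    have rS: "padd p q \<subseteq> ?S" using pq by (auto simp: padd_def)
    have rB: "padd p q \<in> BPolys n" using rS Ssub by (auto simp: BPolys_def)
    have "\<forall>a\<in>?V. \<not> ev (padd p q) a"
    proof
      fix a assume "a \<in> ?V"
      then have "ev p a = ev q a" using pq(3) by blast
      then show "\<not> ev (padd p q) a" using ev_padd[OF fp] by simp
    qed
    then have "padd p q \<in> bideal n G" using null[OF G rB] by blast
    then have "padd p q = {}" using indep[OF rS] by blast
    then show "p = q" by (auto simp: padd_def)
  qed
  have "card (Pow ?S) \<le> card (Pow ?V)"
    by (rule card_inj_on_le[OF inj]) (use fV in auto)
  then have "(2::nat) ^ card ?S \<le> 2 ^ card ?V" using fS fV by (simp add: card_Pow)
  then show ?thesis using power_le_imp_le_exp[of 2] by simp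
qed



lemma V_bound:
  assumes Qs: "Q \<subseteq> Pow {1..n}" and Q12: "Q1 \<in> Q" "Q2 \<in> Q" "Q1 \<inter> Q2 = {}"
  shows "card (Vz n {xi_sys n Q X, xi_sys n Q Y, sigma n}) < (card Q)^2"
proof -
  let ?V = "Vz n {xi_sys n Q X, xi_sys n Q Y, sigma n}"
  have fQ: "finite Q" using Qs by (rule finite_subset) simp
  have XV: "\<And>i. i \<in> {1..n} \<Longrightarrow> X i \<in> Vars n" and YV: "\<And>i. i \<in> {1..n} \<Longrightarrow> Y i \<in> Vars n"
    by (auto simp: Vars_def)
  have eX: "\<forall>a. ev (xi_sys n Q X) a = (\<forall>A\<in>Q. \<not> (\<forall>i\<in>{1..n}. (X i \<in> a) = (i \<in> A)))"
    using xi_sys_props[of n X Q, OF XV fQ] by (rule conjunct2)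
  have eY: "\<forall>a. ev (xi_sys n Q Y) a = (\<forall>A\<in>Q. \<not> (\<forall>i\<in>{1..n}. (Y i \<in> a) = (i \<in> A)))"
    using xi_sys_props[of n Y Q, OF YV fQ] by (rule conjunct2)
  have eS: "\<forall>a. ev (sigma n) a = (\<forall>i\<in>{1..n}. \<not> (X i \<in> a \<and> Y i \<in> a))"
    using sigma_props by (rule conjunct2)
  let ?psi = "\<lambda>a. ({i\<in>{1..n}. X i \<in> a}, {i\<in>{1..n}. Y i \<in> a})"
  let ?T = "{(A, B). A \<in> Q \<and> B \<in> Q \<and> A \<inter> B \<noteq> {}}"
  have img: "?psi ` ?V \<subseteq> ?T"
  proof
    fix z assume "z \<in> ?psi ` ?V"
    then obtain a where a: "a \<in> ?V" "z = ?psi a" by blast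
    then have nx: "\<not> ev (xi_sys n Q X) a" and ny: "\<not> ev (xi_sys n Q Y) a" and ns: "\<not> ev (sigma n) a"
      by (auto simp: Vz_def)
    have "\<exists>A\<in>Q. \<forall>i\<in>{1..n}. (X i \<in> a) = (i \<in> A)" using nx by (simp add: eX)
    then obtain A where A: "A \<in> Q" "\<forall>i\<in>{1..n}. (X i \<in> a) = (i \<in> A)" by (elim bexE)
    have "\<exists>B\<in>Q. \<forall>i\<in>{1..n}. (Y i \<in> a) = (i \<in> B)" using ny by (simp add: eY)
    then obtain B where B: "B \<in> Q" "\<forall>i\<in>{1..n}. (Y i \<in> a) = (i \<in> B)" by (elim bexE)
    have "\<exists>i\<in>{1..n}. X i \<in> a \<and> Y i \<in> a" using ns by (simp add: eS)
    then obtain i where i: "i \<in> {1..n}" "X i \<in> a" "Y i \<in> a" by blast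
    have As: "A \<subseteq> {1..n}" "B \<subseteq> {1..n}" using A(1) B(1) Qs by auto
    have e1: "{i\<in>{1..n}. X i \<in> a} = A" using As(1) A(2) by auto
    have e2: "{i\<in>{1..n}. Y i \<in> a} = B" using As(2) B(2) by auto
    have "i \<in> A" "i \<in> B" using i A(2) B(2) by auto
    then have "A \<inter> B \<noteq> {}" by blast
    moreover have "z = (A, B)" using a(2) e1 e2 by simp
    ultimately show "z \<in> ?T" using A(1) B(1) by simp
  qed
  have inj: "inj_on ?psi ?V"
  proof (rule inj_onI)
    fix a b assume ab: "a \<in> ?V" "b \<in> ?V" "?psi a = ?psi b"
    have sub: "a \<subseteq> Vars n" "b \<subseteq> Vars n" using ab by (auto simp: Vz_def)
    have eq1: "{i\<in>{1..n}. X i \<in> a} = {i\<in>{1..n}. X i \<in> b}" and eq2: "{i\<in>{1..n}. Y i \<in> a} = {i\<in>{1..n}. Y i \<in> b}"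
      using ab(3) by auto
    have "v \<in> a \<longleftrightarrow> v \<in> b" if "v \<in> Vars n" for v
    proof -
      from that obtain i where i: "i \<in> {1..n}" "v = X i \<or> v = Y i" by (auto simp: Vars_def)
      show ?thesis
      proof (cases "v = X i")
        case True
        have "(i \<in> {i\<in>{1..n}. X i \<in> a}) = (i \<in> {i\<in>{1..n}. X i \<in> b})" using eq1 by simp
        then show ?thesis using True i(1) by simp
      next
        case False
        then have v: "v = Y i" using i(2) by simp
        have "(i \<in> {i\<in>{1..n}. Y i \<in> a}) = (i \<in> {i\<in>{1..n}. Y i \<in> b})" using eq2 by simp
        then show ?thesis using v i(1) by simp
      qed
    qed
    then show "a = b" using sub by blast
  qed
  have "?T \<subseteq> Q \<times> Q" by auto
  then have fT: "finite ?T" by (rule finite_subset) (simp add: fQ)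
  have "card ?V \<le> card ?T" by (rule card_inj_on_le[OF inj img fT])
  also have "card ?T < card (Q \<times> Q)"
  proof (rule psubset_card_mono)
    show "finite (Q \<times> Q)" using fQ by simp
    have s: "?T \<subseteq> Q \<times> Q" by auto
    have m1: "(Q1, Q2) \<in> Q \<times> Q" using Q12 by simp
    have m2: "(Q1, Q2) \<notin> ?T" using Q12 by simp
    have "?T \<noteq> Q \<times> Q"
    proof
      assume "?T = Q \<times> Q"
      then show False using m1 m2 by simp
    qed
    then show "?T \<subset> Q \<times> Q" using s by (rule psubsetI[rotated])
  qed
  also have "\<dots> = (card Q)^2" by (simp add: card_cartesian_product power2_eq_square)
  finally show ?thesis .
qed


theorem mainTheorem1:
  fixes n :: nat and Q F :: "nat set set" and G :: "bpoly set"
  assumes "Q \<subseteq> Pow {1..n}"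
    and "fail_prone n F"
    and "is_groebner_basis n G (bideal n {xi_sys n Q X, xi_sys n Q Y, sigma n})"
    and "card (SM n (bideal n {xi_sys n Q X, xi_sys n Q Y, sigma n})) = (card Q)^2"
  shows "\<forall>Q1 \<in> Q. \<forall>Q2 \<in> Q. Q1 \<inter> Q2 \<noteq> {}"
proof (intro ballI notI)
  fix Q1 Q2 assume q: "Q1 \<in> Q" "Q2 \<in> Q" "Q1 \<inter> Q2 = {}"
  have fQ: "finite Q" using assms(1) by (rule finite_subset) simp
  have XV: "\<And>i. i \<in> {1..n} \<Longrightarrow> X i \<in> Vars n" and YV: "\<And>i. i \<in> {1..n} \<Longrightarrow> Y i \<in> Vars n"
    by (auto simp: Vars_def)
  have "xi_sys n Q X \<in> BPolys n" using xi_sys_props[of n X Q, OF XV fQ] by (rule conjunct1)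
  moreover have "xi_sys n Q Y \<in> BPolys n" using xi_sys_props[of n Y Q, OF YV fQ] by (rule conjunct1)
  moreover have "sigma n \<in> BPolys n" using sigma_props by (rule conjunct1)
  ultimately have "{xi_sys n Q X, xi_sys n Q Y, sigma n} \<subseteq> BPolys n" by simp
  then have "card (SM n (bideal n {xi_sys n Q X, xi_sys n Q Y, sigma n}))
      \<le> card (Vz n {xi_sys n Q X, xi_sys n Q Y, sigma n})" by (rule SM_le_V)
  also have "\<dots> < (card Q)^2" by (rule V_bound[OF assms(1) q])
  finally show False using assms(4) by simp
qed


end
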